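(* Let $L\ge2$, $d\ge1$, let $x_0,\dots,x_{L-1}\in\mathbb{R}^d$ be pairwise distinct with equal Euclidean norm, and let $n_0,n_1,\dots$ be i.i.d. $\mathcal{N}(0,I_{d\times d})$. For $\beta\neq0$ let $p_{i,\beta}^{(\ell)}=\frac{\exp(\beta\,n_i^Tx_\ell)}{\sum_{r=0}^{L-1}\exp(\beta\,n_i^Tx_r)}$. Then, almost surely, for every $\ell$, $\lim_{\beta\to0}\lim_{M\to\infty}\frac1M\sum_{i=0}^{M-1}p_{i,\beta}^{(\ell)}=\lim_{\beta\to0}\mathbb{E}[p_{i,\beta}^{(\ell)}]=\frac1L$, and $\lim_{\beta\to0}\lim_{M\to\infty}\frac{1}{M}\sum_{i=0}^{M-1}\frac{n_ip_{i,\beta}^{(\ell)}}{\beta}=\lim_{\beta\to0}\frac1\beta\mathbb{E}[n_ip_{i,\beta}^{(\ell)}]=\frac1L\left[\left(1-\frac1L\right)x_\ell-\frac1L\sum_{r\neq\ell}x_r\right]$. *)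

theory Defs
  imports "HOL-Probability.Probability"
begin

text \<open>Softmax weight p_{i,beta}^{(l)} for a realisation v = n_i(omega) of the noise vector,
  points x_0,...,x_{L-1} given by x :: nat => real^'d.\<close>
definition softmax_weight :: "nat \<Rightarrow> (nat \<Rightarrow> real ^ 'd) \<Rightarrow> real \<Rightarrow> real ^ 'd \<Rightarrow> nat \<Rightarrow> real" where
  "softmax_weight L x \<beta> v l =
     exp (\<beta> * (v \<bullet> x l)) / (\<Sum>r<L. exp (\<beta> * (v \<bullet> x r)))"

end

theory Submission
  imports Defs "HOL-Library.Discrete_Functions" "HOL-Real_Asymp.Real_Asymp"
begin

lemma sw_denom_pos: "(l::nat) < L \<Longrightarrow> 0 < (\<Sum>r<L. exp (b * (v \<bullet> x r)))"
  by (intro sum_pos) auto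

lemma sw_pos: "l < L \<Longrightarrow> 0 < softmax_weight L x b v l"
  unfolding softmax_weight_def using sw_denom_pos[of l L b v x] by simp

lemma sw_le1: "l < L \<Longrightarrow> softmax_weight L x b v l \<le> 1"
proof -
  assume l: "l < L"
  have "exp (b * (v \<bullet> x l)) \<le> (\<Sum>r<L. exp (b * (v \<bullet> x r)))"
    using l by (intro member_le_sum) auto
  then show ?thesis unfolding softmax_weight_def using sw_denom_pos[OF l, of b v x]
    by (simp add: divide_le_eq)
qed

lemma sw_zero: "0 < L \<Longrightarrow> softmax_weight L x 0 v l = 1 / real L"
  unfolding softmax_weight_def by simp

lemma sw_deriv:
  assumes l: "l < L"
  shows "((\<lambda>b. softmax_weight L x b v l) has_real_derivative
     ((exp (b * (v \<bullet> x l)) * (v \<bullet> x l)) * (\<Sum>r<L. exp (b * (v \<bullet> x r)))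
      - exp (b * (v \<bullet> x l)) * (\<Sum>r<L. exp (b * (v \<bullet> x r)) * (v \<bullet> x r)))
     / (\<Sum>r<L. exp (b * (v \<bullet> x r)))\<^sup>2) (at b)"
proof -
  have d1: "((\<lambda>b. exp (b * (v \<bullet> x l))) has_real_derivative exp (b * (v \<bullet> x l)) * (v \<bullet> x l)) (at b)"
    by (auto intro!: derivative_eq_intros)
  have d2: "((\<lambda>b. \<Sum>r<L. exp (b * (v \<bullet> x r))) has_real_derivative (\<Sum>r<L. exp (b * (v \<bullet> x r)) * (v \<bullet> x r))) (at b)"
    by (auto intro!: derivative_eq_intros)
  show ?thesis
    unfolding softmax_weight_def
    using DERIV_divide[OF d1 d2] sw_denom_pos[OF l, of b v x]
    by (simp add: power2_eq_square)
qed

lemma sw_deriv_bound: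
  fixes x :: "nat \<Rightarrow> real ^ 'd"
  assumes l: "l < L" and R: "\<And>r. r < L \<Longrightarrow> norm (x r) \<le> R"
  shows "\<bar>((exp (b * (v \<bullet> x l)) * (v \<bullet> x l)) * (\<Sum>r<L. exp (b * (v \<bullet> x r)))
      - exp (b * (v \<bullet> x l)) * (\<Sum>r<L. exp (b * (v \<bullet> x r)) * (v \<bullet> x r)))
     / (\<Sum>r<L. exp (b * (v \<bullet> x r)))\<^sup>2\<bar> \<le> 2 * R * norm v"
proof -
  define S where "S = (\<Sum>r<L. exp (b * (v \<bullet> x r)))"
  define e where "e = exp (b * (v \<bullet> x l))"
  have S: "0 < S" unfolding S_def using sw_denom_pos[OF l] .
  have e: "0 < e" "e \<le> S" unfolding e_def S_def using l by (auto intro!: member_le_sum)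
  have a: "\<bar>v \<bullet> x r\<bar> \<le> R * norm v" if "r < L" for r
    using Cauchy_Schwarz_ineq2[of v "x r"] R[OF that] 
    by (smt (verit, ccfv_SIG) mult.commute mult_right_mono norm_ge_zero)
  have T: "\<bar>\<Sum>r<L. exp (b * (v \<bullet> x r)) * (v \<bullet> x r)\<bar> \<le> S * (R * norm v)"
  proof -
    have "\<bar>\<Sum>r<L. exp (b * (v \<bullet> x r)) * (v \<bullet> x r)\<bar> \<le> (\<Sum>r<L. \<bar>exp (b * (v \<bullet> x r)) * (v \<bullet> x r)\<bar>)"
      by (rule sum_abs)
    also have "\<dots> \<le> (\<Sum>r<L. exp (b * (v \<bullet> x r)) * (R * norm v))"
      by (intro sum_mono) (auto simp: abs_mult intro!: mult_left_mono a)
    finally show ?thesis unfolding S_def by (simp add: sum_distrib_right)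
  qed
  have "\<bar>e * (v \<bullet> x l) * S - e * (\<Sum>r<L. exp (b * (v \<bullet> x r)) * (v \<bullet> x r))\<bar>
      \<le> e * S * (R * norm v) + e * (S * (R * norm v))"
  proof -
    have "\<bar>e * (v \<bullet> x l) * S\<bar> \<le> e * S * (R * norm v)"
      using a[OF l] e S by (simp add: abs_mult mult.commute mult.left_commute mult_left_mono)
    moreover have "\<bar>e * (\<Sum>r<L. exp (b * (v \<bullet> x r)) * (v \<bullet> x r))\<bar> \<le> e * (S * (R * norm v))"
      using T e by (simp add: abs_mult mult_left_mono)
    ultimately show ?thesis by linarith
  qed
  also have "\<dots> = 2 * R * norm v * (e * S)" by (simp add: algebra_simps)
  also have "\<dots> \<le> 2 * R * norm v * S\<^sup>2"
  proof -
    have "0 \<le> R" using R[OF l] norm_ge_zero order_trans by blast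
    then show ?thesis using e S by (intro mult_left_mono) (auto simp: power2_eq_square)
  qed
  finally show ?thesis using S unfolding S_def[symmetric] e_def[symmetric]
    by (simp add: abs_div pos_divide_le_eq)
qed

lemma sw_lip:
  fixes x :: "nat \<Rightarrow> real ^ 'd"
  assumes l: "l < L" and R: "\<And>r. r < L \<Longrightarrow> norm (x r) \<le> R"
  shows "\<bar>softmax_weight L x b v l - softmax_weight L x q v l\<bar> \<le> 2 * R * norm v * \<bar>b - q\<bar>"
proof -
  have main: "\<bar>softmax_weight L x b v l - softmax_weight L x q v l\<bar> \<le> 2 * R * norm v * \<bar>b - q\<bar>"
    if qb: "q < b" for q b
  proof -
    define D where "D z = ((exp (z * (v \<bullet> x l)) * (v \<bullet> x l)) * (\<Sum>r<L. exp (z * (v \<bullet> x r)))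
      - exp (z * (v \<bullet> x l)) * (\<Sum>r<L. exp (z * (v \<bullet> x r)) * (v \<bullet> x r)))
     / (\<Sum>r<L. exp (z * (v \<bullet> x r)))\<^sup>2" for z
    have dd: "((\<lambda>b. softmax_weight L x b v l) has_real_derivative D z) (at z)" for z
      unfolding D_def by (rule sw_deriv[OF l])
    obtain z where "q < z" "z < b" and eq: "softmax_weight L x b v l - softmax_weight L x q v l = (b - q) * D z"
      using MVT2[OF qb, of "\<lambda>b. softmax_weight L x b v l" D] dd by blast
    have Db: "\<bar>D z\<bar> \<le> 2 * R * norm v"
      unfolding D_def by (rule sw_deriv_bound[where x=x and R=R and b=z and v=v, OF l R])
    have "\<bar>b - q\<bar> * \<bar>D z\<bar> \<le> \<bar>b - q\<bar> * (2 * R * norm v)"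
      by (rule mult_left_mono[OF Db]) simp
    then show ?thesis unfolding eq abs_mult by (simp add: mult.commute)
  qed
  show ?thesis
  proof (cases "q < b")
    case True then show ?thesis by (rule main)
  next
    case False
    show ?thesis
    proof (cases "q = b")
      case True then show ?thesis by simp
    next
      case False
      with \<open>\<not> q < b\<close> have "b < q" by simp
      from main[OF this] show ?thesis by (simp add: abs_minus_commute)
    qed
  qed
qed

lemma sw_quot0:
  fixes x :: "nat \<Rightarrow> real ^ 'd"
  assumes l: "l < L"
  shows "((\<lambda>b. (softmax_weight L x b v l - 1 / real L) / b) \<longlongrightarrow>
     (1 / real L) * (v \<bullet> (x l - (1 / real L) *\<^sub>R (\<Sum>r<L. x r)))) (at 0)"
proof -
  have L0: "0 < L" using l by simp
  have D: "((\<lambda>b. softmax_weight L x b v l) has_real_derivative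
     (1 / real L) * (v \<bullet> (x l - (1 / real L) *\<^sub>R (\<Sum>r<L. x r)))) (at 0)"
  proof -
    have "(1 / real L) * (v \<bullet> (x l - (1 / real L) *\<^sub>R (\<Sum>r<L. x r))) =
      ((exp (0 * (v \<bullet> x l)) * (v \<bullet> x l)) * (\<Sum>r<L. exp (0 * (v \<bullet> x r)))
      - exp (0 * (v \<bullet> x l)) * (\<Sum>r<L. exp (0 * (v \<bullet> x r)) * (v \<bullet> x r)))
     / (\<Sum>r<L. exp (0 * (v \<bullet> x r)))\<^sup>2"
      using L0 by (simp add: inner_diff_right inner_sum_right power2_eq_square field_simps)
    then show ?thesis using sw_deriv[OF l, of x v 0] by simp
  qed
  then show ?thesis unfolding has_field_derivative_iff sw_zero[OF L0] by simp
qed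

lemma filterlim_floor_sqrt: "filterlim floor_sqrt at_top sequentially"
  unfolding filterlim_at_top eventually_sequentially
  by (metis le_floor_sqrtI order.trans)

lemma sq_sandwich:
  fixes S :: "nat \<Rightarrow> real"
  assumes mono: "\<And>m m'. m \<le> m' \<Longrightarrow> S m \<le> S m'" and nonneg: "\<And>m. 0 \<le> S m"
    and lim: "(\<lambda>k. S (k^2) / real (k^2)) \<longlonglongrightarrow> \<mu>"
  shows "(\<lambda>m. S m / real m) \<longlonglongrightarrow> \<mu>"
proof (rule tendsto_sandwich)
  define g where "g k = S ((Suc k)^2) / real ((Suc k)^2) * (real ((Suc k)^2) / real (k^2))" for k
  define h where "h k = S (k^2) / real (k^2) * (real (k^2) / real ((Suc k)^2))" for k
  have r1: "(\<lambda>k::nat. real ((Suc k)^2) / real (k^2)) \<longlonglongrightarrow> 1" by real_asymp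
  have r2: "(\<lambda>k::nat. real (k^2) / real ((Suc k)^2)) \<longlonglongrightarrow> 1" by real_asymp
  have limS: "(\<lambda>k. S ((Suc k)^2) / real ((Suc k)^2)) \<longlonglongrightarrow> \<mu>"
    using LIMSEQ_Suc[OF lim] .
  have g: "g \<longlonglongrightarrow> \<mu>" unfolding g_def using tendsto_mult[OF limS r1] by simp
  have h: "h \<longlonglongrightarrow> \<mu>" unfolding h_def using tendsto_mult[OF lim r2] by simp
  show "\<forall>\<^sub>F m in sequentially. S m / real m \<le> g (floor_sqrt m)"
    unfolding eventually_sequentially
  proof (intro exI[of _ 1] allI impI)
    fix m :: nat assume m: "1 \<le> m"
    define s where "s = floor_sqrt m"
    have s1: "0 < s" using m unfolding s_def by simp
    have le: "s^2 \<le> m" and gt: "m < (Suc s)^2" unfolding s_def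
      using floor_sqrt_power2_le Suc_floor_sqrt_power2_gt by auto
    have "S m / real m \<le> S ((Suc s)^2) / real m"
      using mono[of m "(Suc s)^2"] gt m by (intro divide_right_mono) auto
    also have "\<dots> \<le> S ((Suc s)^2) / real (s^2)"
      using le s1 nonneg m by (intro divide_left_mono) auto
    also have "\<dots> = g s" unfolding g_def using s1 by simp
    finally show "S m / real m \<le> g (floor_sqrt m)" unfolding s_def .
  qed
  show "\<forall>\<^sub>F m in sequentially. h (floor_sqrt m) \<le> S m / real m"
    unfolding eventually_sequentially
  proof (intro exI[of _ 1] allI impI)
    fix m :: nat assume m: "1 \<le> m"
    define s where "s = floor_sqrt m"
    have s1: "0 < s" using m unfolding s_def by simp
    have le: "s^2 \<le> m" and gt: "m < (Suc s)^2" unfolding s_def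
      using floor_sqrt_power2_le Suc_floor_sqrt_power2_gt by auto
    have "h s = S (s^2) / real ((Suc s)^2)" unfolding h_def using s1 by simp
    also have "\<dots> \<le> S m / real ((Suc s)^2)"
      using mono[OF le] by (intro divide_right_mono) auto
    also have "\<dots> \<le> S m / real m"
    proof -
      have "real m \<le> real ((Suc s)^2)" using gt by linarith
      then have "real m \<le> (1 + real s)^2" by simp
      then show ?thesis using m nonneg by (intro divide_left_mono) auto
    qed
    finally show "h (floor_sqrt m) \<le> S m / real m" unfolding s_def .
  qed
  show "(\<lambda>m. g (floor_sqrt m)) \<longlonglongrightarrow> \<mu>"
    by (rule filterlim_compose[OF g filterlim_floor_sqrt])
  show "(\<lambda>m. h (floor_sqrt m)) \<longlonglongrightarrow> \<mu>"
    by (rule filterlim_compose[OF h filterlim_floor_sqrt])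
qed

lemma rat_extension:
  fixes a :: "nat \<Rightarrow> real \<Rightarrow> real" and \<mu> :: "real \<Rightarrow> real" and h :: "nat \<Rightarrow> real"
  assumes conv: "\<And>q. q \<in> \<rat> \<Longrightarrow> q \<noteq> 0 \<Longrightarrow> (\<lambda>m. a m q) \<longlonglongrightarrow> \<mu> q"
    and hb: "eventually (\<lambda>m. h m \<le> H) sequentially"
    and b: "b \<noteq> 0" and \<delta>: "0 < \<delta>" and c: "0 \<le> c" "0 \<le> c'"
    and lip: "\<And>q m. q \<in> \<rat> \<Longrightarrow> \<bar>q - b\<bar> < \<delta> \<Longrightarrow> \<bar>a m b - a m q\<bar> \<le> c * \<bar>b - q\<bar> * h m"
    and lip\<mu>: "\<And>q. q \<in> \<rat> \<Longrightarrow> \<bar>q - b\<bar> < \<delta> \<Longrightarrow> \<bar>\<mu> b - \<mu> q\<bar> \<le> c' * \<bar>b - q\<bar>"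
  shows "(\<lambda>m. a m b) \<longlonglongrightarrow> \<mu> b"
proof (rule LIMSEQ_I)
  fix r :: real assume r: "0 < r"
  define H' where "H' = max H 0"
  define \<eta> where "\<eta> = min (min \<delta> \<bar>b\<bar>) (r / (2 * (c * H' + c' + 1)))"
  have H': "0 \<le> H'" "H \<le> H'" unfolding H'_def by auto
  have cc: "0 < c * H' + c' + 1" using c H' by (simp add: add_nonneg_pos)
  have \<eta>: "0 < \<eta>" unfolding \<eta>_def using \<delta> b r cc by auto
  obtain q where q: "q \<in> \<rat>" "b - \<eta> < q" "q < b + \<eta>"
    using Rats_dense_in_real[of "b - \<eta>" "b + \<eta>"] \<eta> by auto
  have qb: "\<bar>q - b\<bar> < \<eta>" using q by auto
  have "\<eta> \<le> \<bar>b\<bar>" unfolding \<eta>_def by simp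
  with qb have q0: "q \<noteq> 0" by auto
  have qd: "\<bar>q - b\<bar> < \<delta>" using qb unfolding \<eta>_def by simp
  have eta_bound: "\<eta> * (c * H' + c' + 1) \<le> r / 2"
  proof -
    have "\<eta> \<le> r / (2 * (c * H' + c' + 1))" unfolding \<eta>_def by simp
    then have "\<eta> * (c * H' + c' + 1) \<le> r / (2 * (c * H' + c' + 1)) * (c * H' + c' + 1)"
      using cc by (intro mult_right_mono) auto
    also have "\<dots> = r / 2" using cc by (simp add: field_simps)
    finally show ?thesis .
  qed
  obtain N1 where N1: "\<And>m. m \<ge> N1 \<Longrightarrow> norm (a m q - \<mu> q) < r / 2"
    using LIMSEQ_D[OF conv[OF q(1) q0], of "r/2"] r by auto
  obtain N2 where N2: "\<And>m. m \<ge> N2 \<Longrightarrow> h m \<le> H"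
    using hb unfolding eventually_sequentially by auto
  show "\<exists>no. \<forall>m\<ge>no. norm (a m b - \<mu> b) < r"
  proof (intro exI allI impI)
    fix m assume m: "max N1 N2 \<le> m"
    have "\<bar>a m b - \<mu> b\<bar> \<le> \<bar>a m b - a m q\<bar> + \<bar>a m q - \<mu> q\<bar> + \<bar>\<mu> b - \<mu> q\<bar>" by linarith
    also have "\<dots> < c * \<bar>b - q\<bar> * h m + r / 2 + c' * \<bar>b - q\<bar>"
      using lip[OF q(1) qd, of m] N1[of m] lip\<mu>[OF q(1) qd] m by auto
    also have "c * \<bar>b - q\<bar> * h m \<le> c * \<bar>b - q\<bar> * H'"
      using N2[of m] m H' c by (intro mult_left_mono) auto
    also have "c * \<bar>b - q\<bar> * H' + r / 2 + c' * \<bar>b - q\<bar> \<le> \<bar>b - q\<bar> * (c * H' + c' + 1) + r / 2"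
      by (simp add: algebra_simps)
    also have "\<bar>b - q\<bar> * (c * H' + c' + 1) \<le> \<eta> * (c * H' + c' + 1)"
      using qb cc by (intro mult_right_mono) (auto simp: abs_minus_commute)
    finally show "norm (a m b - \<mu> b) < r" using eta_bound by simp
  qed
qed

lemma prod_le_sq: "0 \<le> a \<Longrightarrow> 0 \<le> b \<Longrightarrow> norm ((a::real) * b) \<le> norm (a^2 + b^2)"
proof -
  assume a: "0 \<le> a" and b: "0 \<le> b"
  have "0 \<le> (a - b)^2" by simp
  then have "2 * (a * b) \<le> a^2 + b^2" by (simp add: power2_diff)
  moreover have "0 \<le> a * b" using a b by simp
  ultimately show ?thesis by simp
qed

lemma aux_alg: "(K::real) > 0 \<Longrightarrow> J > 0 \<Longrightarrow> K * V / (K / J)^2 = V * J^2 * inverse K"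
  by (simp add: power2_eq_square field_simps)

lemma (in prob_space) slln_nonneg:
  fixes Y :: "nat \<Rightarrow> 'a \<Rightarrow> real"
  assumes meas[measurable]: "\<And>i. Y i \<in> borel_measurable M"
    and nonneg: "\<And>i \<omega>. 0 \<le> Y i \<omega>"
    and sq: "\<And>i. integrable M (\<lambda>\<omega>. (Y i \<omega>)^2)"
    and mean: "\<And>i. expectation (Y i) = \<mu>"
    and unc: "\<And>i k. i \<noteq> k \<Longrightarrow> expectation (\<lambda>\<omega>. Y i \<omega> * Y k \<omega>) = \<mu>^2"
    and var: "\<And>i. expectation (\<lambda>\<omega>. (Y i \<omega>)^2) \<le> V"
  shows "AE \<omega> in M. (\<lambda>m. (\<Sum>i<m. Y i \<omega>) / real m) \<longlonglongrightarrow> \<mu>"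
proof -
  have int1[simp]: "integrable M (Y i)" for i
    by (rule square_integrable_imp_integrable[OF meas sq])
  have intp[simp]: "integrable M (\<lambda>\<omega>. Y i \<omega> * Y k \<omega>)" for i k
  proof (rule Bochner_Integration.integrable_bound)
    show "integrable M (\<lambda>\<omega>. (Y i \<omega>)^2 + (Y k \<omega>)^2)" using sq by auto
    show "AE \<omega> in M. norm (Y i \<omega> * Y k \<omega>) \<le> norm ((Y i \<omega>)^2 + (Y k \<omega>)^2)"
      using prod_le_sq[OF nonneg nonneg] by (intro AE_I2) simp
  qed simp
  define W where "W i \<omega> = Y i \<omega> - \<mu>" for i \<omega>
  have EW: "expectation (\<lambda>\<omega>. W i \<omega> * W k \<omega>) \<le> (if i = k then V else 0)" for i k
  proof -
    have eq: "(\<lambda>\<omega>. W i \<omega> * W k \<omega>) = (\<lambda>\<omega>. Y i \<omega> * Y k \<omega> - \<mu> * Y i \<omega> - \<mu> * Y k \<omega> + \<mu>^2)"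
      unfolding W_def by (auto simp: algebra_simps power2_eq_square)
    have "expectation (\<lambda>\<omega>. W i \<omega> * W k \<omega>) = expectation (\<lambda>\<omega>. Y i \<omega> * Y k \<omega>) - \<mu> * \<mu> - \<mu> * \<mu> + \<mu>^2"
      unfolding eq by (simp add: mean prob_space)
    then show ?thesis
      using unc[of i k] var[of i] by (auto simp: power2_eq_square) (use zero_le_square[of \<mu>] in linarith)
  qed
  define S where "S m \<omega> = (\<Sum>i<m. Y i \<omega>)" for m \<omega>
  have S_meas[measurable]: "S m \<in> borel_measurable M" for m unfolding S_def by measurable
  have ES: "expectation (S m) = real m * \<mu>" for m
    unfolding S_def by (simp add: mean)
  have Ssq: "integrable M (\<lambda>\<omega>. (S m \<omega>)^2)" for m
    unfolding S_def power2_eq_square sum_product by auto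
  have VS: "variance (S m) \<le> real m * V" for m
  proof -
    have eq: "(\<lambda>\<omega>. (S m \<omega> - expectation (S m))^2) = (\<lambda>\<omega>. \<Sum>i<m. \<Sum>k<m. W i \<omega> * W k \<omega>)"
      unfolding ES S_def W_def power2_eq_square
      by (auto simp: sum_product[symmetric] sum_subtractf)
    have intW: "integrable M (\<lambda>\<omega>. W i \<omega> * W k \<omega>)" for i k
      unfolding W_def by (auto simp: algebra_simps)
    have "variance (S m) = (\<Sum>i<m. \<Sum>k<m. expectation (\<lambda>\<omega>. W i \<omega> * W k \<omega>))"
      unfolding eq using intW by (simp add: integral_sum)
    also have "\<dots> \<le> (\<Sum>i<m. \<Sum>k<m. (if i = k then V else 0))"
      by (intro sum_mono EW)
    also have "\<dots> = real m * V" by simp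
    finally show ?thesis .
  qed
  have "0 \<le> expectation (\<lambda>\<omega>. (Y 0 \<omega>)^2)" by (intro Bochner_Integration.integral_nonneg) simp
  then have V0: "0 \<le> V" using var[of 0] by linarith
  define A where "A j k = {\<omega> \<in> space M. \<bar>S ((Suc k)^2) \<omega> - expectation (S ((Suc k)^2))\<bar> \<ge> real ((Suc k)^2) / real (Suc j)}" for j k
  have A_sets[measurable]: "A j k \<in> sets M" for j k unfolding A_def by measurable
  have A_bound: "measure M (A j k) \<le> V * real (Suc j)^2 * inverse (real (Suc k) ^ 2)" for j k
  proof -
    have "measure M (A j k) \<le> variance (S ((Suc k)^2)) / (real ((Suc k)^2) / real (Suc j))\<^sup>2"
      unfolding A_def by (rule Chebyshev_inequality) (auto simp: Ssq)
    also have "\<dots> \<le> real ((Suc k)^2) * V / (real ((Suc k)^2) / real (Suc j))\<^sup>2"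
      by (intro divide_right_mono VS) auto
    also have "\<dots> = V * real (Suc j)^2 * inverse (real (Suc k) ^ 2)"
      using aux_alg[where K="real ((Suc k)^2)" and V=V and J="real (Suc j)"] by simp
    finally show ?thesis .
  qed
  have summ: "summable (\<lambda>k. measure M (A j k))" for j
  proof (rule summable_comparison_test')
    show "summable (\<lambda>k. V * real (Suc j)^2 * inverse (real (Suc k) ^ 2))"
    proof -
      have "summable (\<lambda>n. inverse (real n ^ 2))" by (rule inverse_power_summable) simp
      from summable_Suc_iff[of "\<lambda>n. inverse (real n ^ 2)", THEN iffD2, OF this]
      show ?thesis by (rule summable_mult)
    qed
    show "norm (measure M (A j k)) \<le> V * real (Suc j)^2 * inverse (real (Suc k) ^ 2)" for k
      using A_bound by simp
  qed
  have "AE \<omega> in M. \<forall>j. eventually (\<lambda>k. \<omega> \<in> space M - A j k) sequentially"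
    unfolding AE_all_countable
    by (intro allI borel_cantelli_AE1) (auto simp: summ less_top[symmetric] emeasure_finite)
  then show ?thesis
  proof (rule AE_mp, intro AE_I2 impI)
    fix \<omega> assume \<omega>: "\<omega> \<in> space M" and ev: "\<forall>j. eventually (\<lambda>k. \<omega> \<in> space M - A j k) sequentially"
    have T: "(\<lambda>k. S ((Suc k)^2) \<omega> / real ((Suc k)^2)) \<longlonglongrightarrow> \<mu>"
    proof (rule LIMSEQ_I)
      fix r :: real assume "0 < r"
      then obtain j0 where j0: "0 < j0" "inverse (real j0) < r" using ex_inverse_of_nat_less by blast
      then obtain j where j: "inverse (real (Suc j)) < r" by (intro that[of "j0 - 1"]) simp
      from ev[rule_format, of j] obtain N where N: "\<And>k. k \<ge> N \<Longrightarrow> \<omega> \<notin> A j k"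
        unfolding eventually_sequentially by auto
      show "\<exists>no. \<forall>k\<ge>no. norm (S ((Suc k)^2) \<omega> / real ((Suc k)^2) - \<mu>) < r"
      proof (intro exI allI impI)
        fix k assume "N \<le> k"
        then have "\<bar>S ((Suc k)^2) \<omega> - real ((Suc k)^2) * \<mu>\<bar> < real ((Suc k)^2) / real (Suc j)"
          using N[of k] \<omega> unfolding A_def ES by auto
        then have "\<bar>S ((Suc k)^2) \<omega> / real ((Suc k)^2) - \<mu>\<bar> < 1 / real (Suc j)"
          by (simp add: field_simps abs_div del: of_nat_Suc)
        then show "norm (S ((Suc k)^2) \<omega> / real ((Suc k)^2) - \<mu>) < r"
          using j by (simp add: inverse_eq_divide)
      qed
    qed
    have T': "(\<lambda>k. S (k^2) \<omega> / real (k^2)) \<longlonglongrightarrow> \<mu>"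
      by (rule LIMSEQ_imp_Suc) (use T in simp)
    have "(\<lambda>m. S m \<omega> / real m) \<longlonglongrightarrow> \<mu>"
    proof (rule sq_sandwich[OF _ _ T'])
      show "S m \<omega> \<le> S m' \<omega>" if "m \<le> m'" for m m'
        unfolding S_def using that nonneg by (intro sum_mono2) auto
      show "0 \<le> S m \<omega>" for m unfolding S_def using nonneg by (intro sum_nonneg) auto
    qed
    then show "(\<lambda>m. (\<Sum>i<m. Y i \<omega>) / real m) \<longlonglongrightarrow> \<mu>" unfolding S_def .
  qed
qed

lemma measurable_vec_lambda[measurable_dest]:
  "(\<And>j. (\<lambda>x. f x j) \<in> borel_measurable N) \<Longrightarrow> (\<lambda>x. (\<chi> j. f x j) :: real ^ 'd) \<in> borel_measurable N"
  by (subst borel_measurable_euclidean_space) (auto simp: Basis_vec_def cart_eq_inner_axis[symmetric])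

lemma measurable_vec_nth[measurable]:
  "(\<lambda>v::real ^ 'd. v $ j) \<in> borel_measurable borel"
  by (simp add: cart_eq_inner_axis)

lemma measurable_sw[measurable]:
  "(\<lambda>v::real ^ 'd. softmax_weight L x b v l) \<in> borel_measurable borel"
  unfolding softmax_weight_def by measurable

locale lem6 = prob_space M for M :: "'w measure" +
  fixes n :: "nat \<Rightarrow> 'w \<Rightarrow> real ^ 'd"
  assumes meas_n[measurable]: "\<And>i. n i \<in> borel_measurable M"
    and ind: "indep_vars (\<lambda>_. borel) (\<lambda>(i, j). \<lambda>\<omega>. n i \<omega> $ j) (UNIV :: (nat \<times> 'd) set)"
    and dist: "\<And>i j. distributed M lborel (\<lambda>\<omega>. n i \<omega> $ j) (\<lambda>t. ennreal (std_normal_density t))"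
begin

lemma meas_comp[measurable]: "(\<lambda>\<omega>. n i \<omega> $ j) \<in> borel_measurable M"
  by measurable

lemma vec_indep: "indep_vars (\<lambda>_. borel) n UNIV"
proof -
  have "indep_vars (\<lambda>a. PiM ({a} \<times> UNIV) (\<lambda>_. borel))
     (\<lambda>a \<omega>. restrict (\<lambda>k. (\<lambda>(i, j). \<lambda>\<omega>. n i \<omega> $ j) k \<omega>) ({a} \<times> UNIV)) (UNIV :: nat set)"
    by (rule indep_vars_restrict[OF ind]) (auto simp: disjoint_family_on_def)
  then have "indep_vars (\<lambda>_. borel)
     (\<lambda>a \<omega>. (\<lambda>F. (\<chi> j. F (a, j)) :: real ^ 'd) (restrict (\<lambda>k. (\<lambda>(i, j). \<lambda>\<omega>. n i \<omega> $ j) k \<omega>) ({a} \<times> UNIV))) (UNIV :: nat set)"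
  proof (rule indep_vars_compose2)
    fix a :: nat
    show "(\<lambda>F. (\<chi> j. F (a, j)) :: real ^ 'd) \<in> PiM ({a} \<times> UNIV) (\<lambda>_. borel) \<rightarrow>\<^sub>M borel"
      by (intro measurable_vec_lambda measurable_component_singleton) auto
  qed
  then show ?thesis
    by (rule indep_vars_cong[THEN iffD1, rotated -1]) (auto simp: vec_eq_iff)
qed

lemma comp_indep: "indep_vars (\<lambda>_. borel) (\<lambda>j \<omega>. n a \<omega> $ j) (UNIV :: 'd set)"
proof -
  have "indep_vars (\<lambda>j. PiM {(a, j)} (\<lambda>_. borel))
     (\<lambda>j \<omega>. restrict (\<lambda>k. (\<lambda>(i, j). \<lambda>\<omega>. n i \<omega> $ j) k \<omega>) {(a, j)}) (UNIV :: 'd set)"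
    by (rule indep_vars_restrict[OF ind]) (auto simp: disjoint_family_on_def)
  then have "indep_vars (\<lambda>_. borel)
     (\<lambda>j \<omega>. (\<lambda>F. F (a, j)) (restrict (\<lambda>k. (\<lambda>(i, j). \<lambda>\<omega>. n i \<omega> $ j) k \<omega>) {(a, j)})) (UNIV :: 'd set)"
    by (rule indep_vars_compose2) (rule measurable_component_singleton, simp)
  then show ?thesis
    by (rule indep_vars_cong[THEN iffD1, rotated -1]) auto
qed

lemma distr_comp: "distr M borel (\<lambda>\<omega>. n a \<omega> $ j) = density lborel (\<lambda>t. ennreal (std_normal_density t))"
proof -
  have "distr M borel (\<lambda>\<omega>. n a \<omega> $ j) = distr M lborel (\<lambda>\<omega>. n a \<omega> $ j)"
    by (rule distr_cong) (auto simp: sets_lborel)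
  also have "\<dots> = density lborel (\<lambda>t. ennreal (std_normal_density t))"
    by (rule distributed_distr_eq_density[OF dist])
  finally show ?thesis .
qed

lemma distr_vec: "distr M borel (n a) = distr (PiM UNIV (\<lambda>_::'d. density lborel (\<lambda>t. ennreal (std_normal_density t)))) borel
   (\<lambda>F. \<chi> j. F j)"
proof -
  have rv: "random_variable borel (\<lambda>\<omega>. n a \<omega> $ j)" for j by measurable
  have "distr M (PiM UNIV (\<lambda>_. borel)) (\<lambda>\<omega>. \<lambda>j\<in>UNIV. n a \<omega> $ j) = PiM UNIV (\<lambda>j. distr M borel (\<lambda>\<omega>. n a \<omega> $ j))"
    using indep_vars_iff_distr_eq_PiM[where I=UNIV and M'="\<lambda>_. borel" and X="\<lambda>j \<omega>. n a \<omega> $ j"] rv comp_indep by auto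
  also have "\<dots> = PiM UNIV (\<lambda>_::'d. density lborel (\<lambda>t. ennreal (std_normal_density t)))"
    by (simp add: distr_comp)
  finally have eq: "distr M (PiM UNIV (\<lambda>_. borel)) (\<lambda>\<omega>. \<lambda>j\<in>UNIV. n a \<omega> $ j) = PiM UNIV (\<lambda>_::'d. density lborel (\<lambda>t. ennreal (std_normal_density t)))" .
  have mv: "(\<lambda>F. (\<chi> j. F j) :: real ^ 'd) \<in> PiM UNIV (\<lambda>_. borel) \<rightarrow>\<^sub>M borel"
    by (intro measurable_vec_lambda measurable_component_singleton) auto
  have "distr M borel (n a) = distr M borel ((\<lambda>F. \<chi> j. F j) \<circ> (\<lambda>\<omega>. \<lambda>j\<in>UNIV. n a \<omega> $ j))"
    by (rule distr_cong) (auto simp: vec_eq_iff)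
  also have "\<dots> = distr (distr M (PiM UNIV (\<lambda>_. borel)) (\<lambda>\<omega>. \<lambda>j\<in>UNIV. n a \<omega> $ j)) borel (\<lambda>F. \<chi> j. F j)"
    by (rule distr_distr[symmetric, OF mv]) measurable
  also have "\<dots> = distr (PiM UNIV (\<lambda>_::'d. density lborel (\<lambda>t. ennreal (std_normal_density t)))) borel (\<lambda>F. \<chi> j. F j)"
    unfolding eq ..
  finally show ?thesis .
qed

lemma distr_same: "distr M borel (n a) = distr M borel (n b)"
  unfolding distr_vec ..

lemma integral_same:
  fixes f :: "real ^ 'd \<Rightarrow> real"
  assumes [measurable]: "f \<in> borel_measurable borel"
  shows "expectation (\<lambda>\<omega>. f (n a \<omega>)) = expectation (\<lambda>\<omega>. f (n b \<omega>))"
    and "integrable M (\<lambda>\<omega>. f (n a \<omega>)) \<longleftrightarrow> integrable M (\<lambda>\<omega>. f (n b \<omega>))"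
proof -
  show "expectation (\<lambda>\<omega>. f (n a \<omega>)) = expectation (\<lambda>\<omega>. f (n b \<omega>))"
    using integral_distr[of "n a" M borel f] integral_distr[of "n b" M borel f] distr_same[of a b] by simp
  show "integrable M (\<lambda>\<omega>. f (n a \<omega>)) \<longleftrightarrow> integrable M (\<lambda>\<omega>. f (n b \<omega>))"
    using integrable_distr_eq[of "n a" M borel f] integrable_distr_eq[of "n b" M borel f] distr_same[of a b] by simp
qed

lemma indep_pair:
  fixes f g :: "real ^ 'd \<Rightarrow> real"
  assumes [measurable]: "f \<in> borel_measurable borel" "g \<in> borel_measurable borel"
    and ab: "a \<noteq> b" and fi: "integrable M (\<lambda>\<omega>. f (n a \<omega>))" and gi: "integrable M (\<lambda>\<omega>. g (n b \<omega>))"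
  shows "expectation (\<lambda>\<omega>. f (n a \<omega>) * g (n b \<omega>)) = expectation (\<lambda>\<omega>. f (n a \<omega>)) * expectation (\<lambda>\<omega>. g (n b \<omega>))"
proof -
  define Z where "Z t \<omega> = (if t = a then f (n t \<omega>) else g (n t \<omega>))" for t \<omega>
  have "indep_vars (\<lambda>_. borel) n {a, b}" using indep_vars_subset[OF vec_indep] by auto
  then have ind2: "indep_vars (\<lambda>_. borel) (\<lambda>t \<omega>. (if t = a then f else g) (n t \<omega>)) {a, b}"
    by (rule indep_vars_compose2) auto
  have "expectation (\<lambda>\<omega>. \<Prod>t\<in>{a, b}. (if t = a then f else g) (n t \<omega>)) =
        (\<Prod>t\<in>{a, b}. expectation (\<lambda>\<omega>. (if t = a then f else g) (n t \<omega>)))"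
    by (rule indep_vars_lebesgue_integral[OF _ ind2]) (use fi gi ab in auto)
  then show ?thesis using ab by simp
qed

lemma comp_moments:
  shows "integrable M (\<lambda>\<omega>. (n a \<omega> $ j)^k)"
    and "integrable M (\<lambda>\<omega>. \<bar>n a \<omega> $ j\<bar>^k)"
    and "expectation (\<lambda>\<omega>. n a \<omega> $ j) = 0"
    and "expectation (\<lambda>\<omega>. (n a \<omega> $ j)^2) = 1"
proof -
  show "integrable M (\<lambda>\<omega>. (n a \<omega> $ j)^k)"
    using distributed_integrable[OF dist[of a j], of "\<lambda>x. x^k"] integrable_std_normal_moment[of k] by simp
  show "integrable M (\<lambda>\<omega>. \<bar>n a \<omega> $ j\<bar>^k)"
    using distributed_integrable[OF dist[of a j], of "\<lambda>x. \<bar>x\<bar>^k"] integrable_std_normal_moment_abs[of k] by simp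
  show "expectation (\<lambda>\<omega>. n a \<omega> $ j) = 0"
    using distributed_integral[OF dist[of a j], of "\<lambda>x. x"] integral_std_normal_moment_odd[of 0] by simp
  show "expectation (\<lambda>\<omega>. (n a \<omega> $ j)^2) = 1"
    using distributed_integral[OF dist[of a j], of "\<lambda>x. x^2"] integral_std_normal_moment_even[of 1] by simp
qed

lemma comp_cross:
  assumes "j \<noteq> k"
  shows "expectation (\<lambda>\<omega>. n a \<omega> $ j * n a \<omega> $ k) = 0"
proof -
  have "indep_vars (\<lambda>_. borel) (\<lambda>j \<omega>. n a \<omega> $ j) {j, k}" using indep_vars_subset[OF comp_indep] by auto
  then have "expectation (\<lambda>\<omega>. \<Prod>t\<in>{j, k}. n a \<omega> $ t) = (\<Prod>t\<in>{j, k}. expectation (\<lambda>\<omega>. n a \<omega> $ t))"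
    by (rule indep_vars_lebesgue_integral[rotated]) (auto intro: comp_moments(1)[where k=1, simplified])
  then show ?thesis using assms by (simp add: comp_moments)
qed

end

definition hv :: "real ^ 'd \<Rightarrow> real" where
  "hv v = (\<Sum>j\<in>UNIV. 1 + (v $ j)^2)"

lemma hv_nonneg: "0 \<le> hv v"
  unfolding hv_def by (intro sum_nonneg) (simp add: add_nonneg_nonneg)

lemma abs_le_1_sq: "\<bar>t::real\<bar> \<le> 1 + t^2"
proof -
  have "0 \<le> (\<bar>t\<bar> - 1)^2" by simp
  then have "2 * \<bar>t\<bar> \<le> t^2 + 1" by (simp add: power2_diff)
  moreover have "0 \<le> t^2" by simp
  ultimately show ?thesis by linarith
qed

lemma norm_le_hv: "norm v \<le> hv v"
proof -
  have "norm v \<le> (\<Sum>j\<in>UNIV. \<bar>v $ j\<bar>)" by (rule norm_le_l1_cart)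
  also have "\<dots> \<le> hv v" unfolding hv_def by (intro sum_mono abs_le_1_sq)
  finally show ?thesis .
qed

lemma norm_sq_eq: "(norm (v::real^'d))^2 = (\<Sum>j\<in>UNIV. (v $ j)^2)"
  by (subst power2_norm_eq_inner) (simp add: inner_vec_def power2_eq_square)

lemma norm_sq_le_hv: "(norm v)^2 \<le> hv v"
  unfolding norm_sq_eq hv_def by (intro sum_mono) simp

lemma norm_comp_le_hv: "norm v * \<bar>v $ j\<bar> \<le> hv v"
proof -
  have "norm v * \<bar>v $ j\<bar> \<le> norm v * norm v"
    by (intro mult_left_mono) (auto simp: component_le_norm_cart)
  also have "\<dots> \<le> hv v" using norm_sq_le_hv[of v] by (simp add: power2_eq_square)
  finally show ?thesis .
qed

lemma hv_meas[measurable]: "hv \<in> borel_measurable borel"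
  unfolding hv_def by measurable

lemma sw_lipB:
  fixes x :: "nat \<Rightarrow> real ^ 'd"
  assumes l: "l < L" and R: "\<And>r. r < L \<Longrightarrow> norm (x r) \<le> R"
    and b: "b \<noteq> 0" and q: "\<bar>q - b\<bar> < \<bar>b\<bar> / 2"
  shows "\<bar>softmax_weight L x b v l * v $ j / b - softmax_weight L x q v l * v $ j / q\<bar>
     \<le> (2 * R / \<bar>b\<bar> + 2 / b^2) * \<bar>b - q\<bar> * hv v"
proof -
  have R0: "0 \<le> R" using R[OF l] norm_ge_zero order_trans by blast
  have qa: "\<bar>b\<bar> / 2 \<le> \<bar>q\<bar>" using q by linarith
  have q0: "q \<noteq> 0" using qa b by auto
  define pb where "pb = softmax_weight L x b v l"
  define pq where "pq = softmax_weight L x q v l"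
  have pq: "0 \<le> pq" "pq \<le> 1" unfolding pq_def using sw_pos[OF l] sw_le1[OF l] by (auto intro: less_imp_le)
  have lip: "\<bar>pb - pq\<bar> \<le> 2 * R * norm v * \<bar>b - q\<bar>" unfolding pb_def pq_def by (rule sw_lip[OF l R])
  have eq: "pb / b - pq / q = (pb - pq) / b + pq * (q - b) / (b * q)"
    using b q0 by (simp add: field_simps)
  have t1: "\<bar>(pb - pq) / b\<bar> \<le> 2 * R * norm v * \<bar>b - q\<bar> / \<bar>b\<bar>"
    using lip b by (simp add: abs_div divide_right_mono)
  have t2: "\<bar>pq * (q - b) / (b * q)\<bar> \<le> 2 * \<bar>b - q\<bar> / b^2"
  proof -
    have "\<bar>pq * (q - b) / (b * q)\<bar> = pq * \<bar>b - q\<bar> / (\<bar>b\<bar> * \<bar>q\<bar>)"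
      using pq by (simp add: abs_mult abs_div abs_minus_commute)
    also have "\<dots> \<le> \<bar>b - q\<bar> / (\<bar>b\<bar> * \<bar>q\<bar>)"
      using pq b q0 by (intro divide_right_mono) (auto simp: mult_left_le_one_le)
    also have "\<dots> \<le> \<bar>b - q\<bar> / (\<bar>b\<bar> * (\<bar>b\<bar> / 2))"
    proof -
      have pos: "0 < \<bar>b\<bar> * (\<bar>b\<bar> / 2)" "0 < \<bar>b\<bar> * \<bar>q\<bar>" using b q0 by (auto simp: zero_less_mult_iff)
      have "\<bar>b\<bar> * (\<bar>b\<bar> / 2) \<le> \<bar>b\<bar> * \<bar>q\<bar>" using qa by (intro mult_left_mono) auto
      then show ?thesis by (rule divide_left_mono) (use pos in auto)
    qed
    also have "\<dots> = 2 * \<bar>b - q\<bar> / b^2" using b by (simp add: power2_eq_square field_simps)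
    finally show ?thesis .
  qed
  have main: "\<bar>pb / b - pq / q\<bar> \<le> 2 * R * norm v * \<bar>b - q\<bar> / \<bar>b\<bar> + 2 * \<bar>b - q\<bar> / b^2"
    unfolding eq using t1 t2 abs_triangle_ineq[of "(pb - pq) / b" "pq * (q - b) / (b * q)"] by linarith
  have "\<bar>pb * v $ j / b - pq * v $ j / q\<bar> = \<bar>pb / b - pq / q\<bar> * \<bar>v $ j\<bar>"
    by (simp add: abs_mult[symmetric] algebra_simps)
  also have "\<dots> \<le> (2 * R * norm v * \<bar>b - q\<bar> / \<bar>b\<bar> + 2 * \<bar>b - q\<bar> / b^2) * norm v"
    using main by (intro mult_mono) (auto simp: component_le_norm_cart)
  also have "\<dots> = \<bar>b - q\<bar> * (2 * R / \<bar>b\<bar> * (norm v)^2 + 2 / b^2 * norm v)"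
    by (simp add: power2_eq_square algebra_simps)
  also have "\<dots> \<le> \<bar>b - q\<bar> * (2 * R / \<bar>b\<bar> * hv v + 2 / b^2 * hv v)"
    using R0 by (intro mult_left_mono add_mono mult_left_mono norm_sq_le_hv norm_le_hv) auto
  also have "\<dots> = (2 * R / \<bar>b\<bar> + 2 / b^2) * \<bar>b - q\<bar> * hv v" by (simp add: algebra_simps)
  finally show ?thesis unfolding pb_def pq_def .
qed

lemma vec_integral_comp:
  fixes f :: "'a \<Rightarrow> real ^ 'd"
  assumes "integrable M f"
  shows "(integral\<^sup>L M f) $ j = (\<integral>\<omega>. f \<omega> $ j \<partial>M)"
  using assms by (simp add: cart_eq_inner_axis)

lemma avg_lip:
  fixes f g h :: "nat \<Rightarrow> real"
  assumes "\<And>i. \<bar>f i - g i\<bar> \<le> K * h i"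
  shows "\<bar>(1 / real m) * (\<Sum>i<m. f i) - (1 / real m) * (\<Sum>i<m. g i)\<bar> \<le> K * ((\<Sum>i<m. h i) / real m)"
proof -
  have "\<bar>(1 / real m) * (\<Sum>i<m. f i) - (1 / real m) * (\<Sum>i<m. g i)\<bar> = (1 / real m) * \<bar>\<Sum>i<m. f i - g i\<bar>"
    unfolding sum_subtractf right_diff_distrib[symmetric] abs_mult by simp
  also have "\<dots> \<le> (1 / real m) * (\<Sum>i<m. K * h i)"
    by (intro mult_left_mono order.trans[OF sum_abs] sum_mono assms) auto
  also have "\<dots> = K * ((\<Sum>i<m. h i) / real m)" by (simp add: sum_distrib_left sum_divide_distrib)
  finally show ?thesis .
qed

lemma exp_lip:
  fixes f g h :: "'a \<Rightarrow> real"
  assumes "integrable M f" "integrable M g" "integrable M h" "\<And>\<omega>. \<bar>f \<omega> - g \<omega>\<bar> \<le> K * h \<omega>"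
  shows "\<bar>integral\<^sup>L M f - integral\<^sup>L M g\<bar> \<le> K * integral\<^sup>L M h"
proof -
  have "\<bar>integral\<^sup>L M f - integral\<^sup>L M g\<bar> = \<bar>\<integral>\<omega>. f \<omega> - g \<omega> \<partial>M\<bar>" using assms by simp
  also have "\<dots> \<le> (\<integral>\<omega>. \<bar>f \<omega> - g \<omega>\<bar> \<partial>M)" by (rule integral_abs_bound)
  also have "\<dots> \<le> (\<integral>\<omega>. K * h \<omega> \<partial>M)" using assms by (intro integral_mono) auto
  also have "\<dots> = K * integral\<^sup>L M h" by simp
  finally show ?thesis .
qed

context lem6
begin

lemma slln_F:
  fixes F :: "real ^ 'd \<Rightarrow> real"
  assumes [measurable]: "F \<in> borel_measurable borel" and nn: "\<And>v. 0 \<le> F v"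
    and sq: "integrable M (\<lambda>\<omega>. (F (n 0 \<omega>))^2)"
  shows "AE \<omega> in M. (\<lambda>m. (\<Sum>i<m. F (n i \<omega>)) / real m) \<longlonglongrightarrow> expectation (\<lambda>\<omega>. F (n 0 \<omega>))"
proof -
  have sqi: "integrable M (\<lambda>\<omega>. (F (n i \<omega>))^2)" for i
    using sq integral_same(2)[of "\<lambda>v. (F v)^2" i 0] by simp
  have inti: "integrable M (\<lambda>\<omega>. F (n i \<omega>))" for i
    by (rule square_integrable_imp_integrable[OF _ sqi]) simp
  show ?thesis
  proof (rule slln_nonneg[where Y="\<lambda>i \<omega>. F (n i \<omega>)" and V="expectation (\<lambda>\<omega>. (F (n 0 \<omega>))^2)"])
    show "\<And>i. random_variable borel (\<lambda>\<omega>. F (n i \<omega>))" by measurable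
    show "0 \<le> F (n i \<omega>)" for i \<omega> by (rule nn)
    show "integrable M (\<lambda>\<omega>. (F (n i \<omega>))^2)" for i by (rule sqi)
    show "expectation (\<lambda>\<omega>. F (n i \<omega>)) = expectation (\<lambda>\<omega>. F (n 0 \<omega>))" for i
      by (rule integral_same(1)) simp
    show "expectation (\<lambda>\<omega>. F (n i \<omega>) * F (n k \<omega>)) = (expectation (\<lambda>\<omega>. F (n 0 \<omega>)))^2" if "i \<noteq> k" for i k
      using indep_pair[OF _ _ that inti inti] integral_same(1)[of F i 0] integral_same(1)[of F k 0]
      by (simp add: power2_eq_square)
    show "expectation (\<lambda>\<omega>. (F (n i \<omega>))^2) \<le> expectation (\<lambda>\<omega>. (F (n 0 \<omega>))^2)" for i
      using integral_same(1)[of "\<lambda>v. (F v)^2" i 0] by simp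
  qed
qed

lemma int_comp: "integrable M (\<lambda>\<omega>. n a \<omega> $ j)"
  using comp_moments(1)[where k=1] by simp

lemma int_hv: "integrable M (\<lambda>\<omega>. hv (n a \<omega>))"
  unfolding hv_def using comp_moments(1)[where k=2] by auto

lemma int_norm: "integrable M (\<lambda>\<omega>. norm (n a \<omega>))"
  by (rule Bochner_Integration.integrable_bound[OF int_hv])
     (auto intro!: AE_I2 order.trans[OF norm_le_hv] simp: hv_nonneg)

lemma int_prod_comp: "integrable M (\<lambda>\<omega>. n a \<omega> $ j * n a \<omega> $ k)"
proof (rule Bochner_Integration.integrable_bound[OF int_hv])
  show "AE \<omega> in M. norm (n a \<omega> $ j * n a \<omega> $ k) \<le> norm (hv (n a \<omega>))"
  proof (intro AE_I2)
    fix \<omega>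
    have "\<bar>n a \<omega> $ j * n a \<omega> $ k\<bar> \<le> norm (n a \<omega>) * norm (n a \<omega>)"
      unfolding abs_mult by (intro mult_mono) (auto simp: component_le_norm_cart)
    also have "\<dots> \<le> hv (n a \<omega>)" using norm_sq_le_hv[of "n a \<omega>"] by (simp add: power2_eq_square)
    finally show "norm (n a \<omega> $ j * n a \<omega> $ k) \<le> norm (hv (n a \<omega>))" using hv_nonneg by simp
  qed
qed measurable

context
  fixes x :: "nat \<Rightarrow> real ^ 'd" and L l :: nat and R :: real
  assumes l: "l < L" and R: "\<And>r. r < L \<Longrightarrow> norm (x r) \<le> R"
begin

lemma R0: "0 \<le> R" using R[OF l] norm_ge_zero order_trans by blast

lemma int_p: "integrable M (\<lambda>\<omega>. softmax_weight L x b (n a \<omega>) l)"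
  by (rule finite_measure.integrable_const_bound[where B=1])
     (auto intro!: AE_I2 simp: sw_le1[OF l] less_imp_le[OF sw_pos[OF l]] finite_measure_axioms)

lemma int_pvec: "integrable M (\<lambda>\<omega>. softmax_weight L x b (n a \<omega>) l *\<^sub>R n a \<omega>)"
  by (rule Bochner_Integration.integrable_bound[OF int_norm])
     (auto intro!: AE_I2 mult_left_le_one_le simp: sw_le1[OF l] less_imp_le[OF sw_pos[OF l]])

lemma int_pcomp: "integrable M (\<lambda>\<omega>. softmax_weight L x b (n a \<omega>) l * n a \<omega> $ j)"
  by (rule Bochner_Integration.integrable_bound[OF int_comp[THEN integrable_abs]])
     (auto intro!: AE_I2 mult_left_le_one_le simp: abs_mult sw_le1[OF l] less_imp_le[OF sw_pos[OF l]])

lemma lipA: "\<bar>expectation (\<lambda>\<omega>. softmax_weight L x b (n a \<omega>) l) - expectation (\<lambda>\<omega>. softmax_weight L x q (n a \<omega>) l)\<bar>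
   \<le> 2 * R * \<bar>b - q\<bar> * expectation (\<lambda>\<omega>. hv (n a \<omega>))"
proof (rule exp_lip[OF int_p int_p int_hv])
  fix \<omega>
  have "\<bar>softmax_weight L x b (n a \<omega>) l - softmax_weight L x q (n a \<omega>) l\<bar> \<le> 2 * R * norm (n a \<omega>) * \<bar>b - q\<bar>"
    by (rule sw_lip[OF l R])
  also have "\<dots> \<le> 2 * R * \<bar>b - q\<bar> * hv (n a \<omega>)"
    using R0 norm_le_hv[of "n a \<omega>"] by (simp add: mult.commute mult.left_commute mult_left_mono)
  finally show "\<bar>softmax_weight L x b (n a \<omega>) l - softmax_weight L x q (n a \<omega>) l\<bar> \<le> 2 * R * \<bar>b - q\<bar> * hv (n a \<omega>)" .
qed

lemma X1: "((\<lambda>\<beta>. expectation (\<lambda>\<omega>. softmax_weight L x \<beta> (n i \<omega>) l)) \<longlongrightarrow> 1 / real L) (at 0)"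
proof (rule LIM_zero_cancel, rule Lim_null_comparison)
  have L0: "0 < L" using l by simp
  show "\<forall>\<^sub>F \<beta> in at 0. norm (expectation (\<lambda>\<omega>. softmax_weight L x \<beta> (n i \<omega>) l) - 1 / real L)
      \<le> 2 * R * \<bar>\<beta> - 0\<bar> * expectation (\<lambda>\<omega>. hv (n i \<omega>))"
    using lipA[of \<beta> i 0 for \<beta>] by (simp add: sw_zero[OF L0] prob_space)
  show "((\<lambda>\<beta>. 2 * R * \<bar>\<beta> - 0\<bar> * expectation (\<lambda>\<omega>. hv (n i \<omega>))) \<longlongrightarrow> 0) (at 0)"
    by (rule tendsto_eq_intros refl)+ simp
qed

lemma X2: "((\<lambda>\<beta>. (1 / \<beta>) *\<^sub>R integral\<^sup>L M (\<lambda>\<omega>. softmax_weight L x \<beta> (n i \<omega>) l *\<^sub>R n i \<omega>))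
   \<longlongrightarrow> (1 / real L) *\<^sub>R ((1 - 1 / real L) *\<^sub>R x l - (1 / real L) *\<^sub>R (\<Sum>r\<in>{..<L} - {l}. x r))) (at 0)"
proof -
  define c where "c = x l - (1 / real L) *\<^sub>R (\<Sum>r<L. x r)"
  have L0: "0 < L" using l by simp
  have target: "(1 / real L) *\<^sub>R ((1 - 1 / real L) *\<^sub>R x l - (1 / real L) *\<^sub>R (\<Sum>r\<in>{..<L} - {l}. x r)) = (1 / real L) *\<^sub>R c"
  proof -
    have "(\<Sum>r<L. x r) = x l + (\<Sum>r\<in>{..<L} - {l}. x r)" using l by (simp add: sum.remove)
    then show ?thesis unfolding c_def by (simp add: algebra_simps)
  qed
  have comp: "((\<lambda>\<beta>. ((1 / \<beta>) *\<^sub>R integral\<^sup>L M (\<lambda>\<omega>. softmax_weight L x \<beta> (n i \<omega>) l *\<^sub>R n i \<omega>)) $ j)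
     \<longlongrightarrow> ((1 / real L) *\<^sub>R c) $ j) (at 0)" for j
  proof -
    define D where "D \<beta> \<omega> = (softmax_weight L x \<beta> (n i \<omega>) l - 1 / real L) / \<beta> * n i \<omega> $ j" for \<beta> \<omega>
    define f0 where "f0 \<omega> = (1 / real L) * (n i \<omega> \<bullet> c) * n i \<omega> $ j" for \<omega>
    have D_meas[measurable]: "D \<beta> \<in> borel_measurable M" for \<beta> unfolding D_def by measurable
    have f0_meas[measurable]: "f0 \<in> borel_measurable M" unfolding f0_def by measurable
    have w: "integrable M (\<lambda>\<omega>. 2 * R * hv (n i \<omega>))" using int_hv by simp
    have bnd: "norm (D \<beta> \<omega>) \<le> 2 * R * hv (n i \<omega>)" for \<beta> \<omega>
    proof (cases "\<beta> = 0")
      case True then show ?thesis unfolding D_def using R0 hv_nonneg[of "n i \<omega>"] by simp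
    next
      case False
      have "\<bar>softmax_weight L x \<beta> (n i \<omega>) l - 1 / real L\<bar> \<le> 2 * R * norm (n i \<omega>) * \<bar>\<beta> - 0\<bar>"
        using sw_lip[where x=x and R=R and b=\<beta> and v="n i \<omega>" and q=0, OF l R] unfolding sw_zero[OF L0] by simp
      then have a: "\<bar>(softmax_weight L x \<beta> (n i \<omega>) l - 1 / real L) / \<beta>\<bar> \<le> 2 * R * norm (n i \<omega>)"
        using False by (simp add: abs_div divide_le_eq)
      have "norm (D \<beta> \<omega>) \<le> 2 * R * norm (n i \<omega>) * \<bar>n i \<omega> $ j\<bar>"
        unfolding D_def real_norm_def abs_mult[of "(softmax_weight L x \<beta> (n i \<omega>) l - 1 / real L) / \<beta>"]
        using mult_right_mono[OF a abs_ge_zero[of "n i \<omega> $ j"]] .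
      also have "\<dots> \<le> 2 * R * hv (n i \<omega>)"
        using norm_comp_le_hv[of "n i \<omega>" j] R0 by (simp add: mult.assoc mult_left_mono)
      finally show ?thesis .
    qed
    have lim: "((\<lambda>\<beta>. expectation (D \<beta>)) \<longlongrightarrow> expectation f0) (at 0)"
      unfolding tendsto_at_iff_sequentially comp_def
    proof (intro allI impI)
      fix X :: "nat \<Rightarrow> real" assume X: "\<forall>k. X k \<in> UNIV - {0}" "X \<longlonglongrightarrow> 0"
      have Xat: "filterlim X (at 0) sequentially" using X by (intro filterlim_atI) auto
      show "(\<lambda>k. expectation (D (X k))) \<longlonglongrightarrow> expectation f0"
      proof (rule integral_dominated_convergence[where w="\<lambda>\<omega>. 2 * R * hv (n i \<omega>)"])
        show "f0 \<in> borel_measurable M" by measurable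
        show "\<And>k. D (X k) \<in> borel_measurable M" by measurable
        show "integrable M (\<lambda>\<omega>. 2 * R * hv (n i \<omega>))" by (rule w)
        show "AE \<omega> in M. (\<lambda>k. D (X k) \<omega>) \<longlonglongrightarrow> f0 \<omega>"
        proof (intro AE_I2)
          fix \<omega>
          have "((\<lambda>b. (softmax_weight L x b (n i \<omega>) l - 1 / real L) / b) \<longlongrightarrow> (1 / real L) * (n i \<omega> \<bullet> c)) (at 0)"
            unfolding c_def by (rule sw_quot0[OF l])
          then have "(\<lambda>k. (softmax_weight L x (X k) (n i \<omega>) l - 1 / real L) / X k) \<longlonglongrightarrow> (1 / real L) * (n i \<omega> \<bullet> c)"
            by (rule filterlim_compose[OF _ Xat])
          from tendsto_mult[OF this tendsto_const[of "n i \<omega> $ j"]]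
          show "(\<lambda>k. D (X k) \<omega>) \<longlonglongrightarrow> f0 \<omega>" unfolding D_def f0_def .
        qed
        show "AE \<omega> in M. norm (D (X k) \<omega>) \<le> 2 * R * hv (n i \<omega>)" for k by (intro AE_I2 bnd)
      qed
    qed
    have Ef0: "expectation f0 = (1 / real L) * c $ j"
    proof -
      have eq: "f0 = (\<lambda>\<omega>. \<Sum>k\<in>UNIV. (1 / real L) * c $ k * (n i \<omega> $ k * n i \<omega> $ j))"
        unfolding f0_def inner_vec_def by (auto simp: sum_distrib_left sum_distrib_right algebra_simps)
      have "expectation f0 = (\<Sum>k\<in>UNIV. (1 / real L) * c $ k * expectation (\<lambda>\<omega>. n i \<omega> $ k * n i \<omega> $ j))"
        unfolding eq using int_prod_comp by (simp add: integral_sum)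
      also have "\<dots> = (\<Sum>k\<in>UNIV. (1 / real L) * c $ k * (if k = j then 1 else 0))"
        by (intro sum.cong refl) (auto simp: comp_cross comp_moments(4)[unfolded power2_eq_square])
      also have "\<dots> = (1 / real L) * c $ j" by (simp add: if_distrib cong: if_cong)
      finally show ?thesis .
    qed
    have eqD: "((1 / \<beta>) *\<^sub>R integral\<^sup>L M (\<lambda>\<omega>. softmax_weight L x \<beta> (n i \<omega>) l *\<^sub>R n i \<omega>)) $ j = expectation (D \<beta>)"
      if b0: "\<beta> \<noteq> 0" for \<beta>
    proof -
      have "((1 / \<beta>) *\<^sub>R integral\<^sup>L M (\<lambda>\<omega>. softmax_weight L x \<beta> (n i \<omega>) l *\<^sub>R n i \<omega>)) $ j
          = (1 / \<beta>) * expectation (\<lambda>\<omega>. softmax_weight L x \<beta> (n i \<omega>) l * n i \<omega> $ j)"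
        using vec_integral_comp[OF int_pvec, of \<beta> i j] by simp
      moreover have "D \<beta> = (\<lambda>\<omega>. (1 / \<beta>) * (softmax_weight L x \<beta> (n i \<omega>) l * n i \<omega> $ j) - (1 / (\<beta> * real L)) * n i \<omega> $ j)"
        using b0 by (auto simp: D_def fun_eq_iff field_simps)
      then have "expectation (D \<beta>) = (1 / \<beta>) * expectation (\<lambda>\<omega>. softmax_weight L x \<beta> (n i \<omega>) l * n i \<omega> $ j)"
        using int_pcomp[of \<beta> i j] int_comp[of i j] comp_moments(3)[of i j] by simp
      ultimately show ?thesis by simp
    qed
    have lim': "((\<lambda>\<beta>. expectation (D \<beta>)) \<longlongrightarrow> ((1 / real L) *\<^sub>R c) $ j) (at 0)"
      using lim Ef0 by simp
    show ?thesis
    proof (rule Lim_transform_eventually[OF lim'])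
      show "\<forall>\<^sub>F \<beta> in at 0. expectation (D \<beta>) =
        ((1 / \<beta>) *\<^sub>R integral\<^sup>L M (\<lambda>\<omega>. softmax_weight L x \<beta> (n i \<omega>) l *\<^sub>R n i \<omega>)) $ j"
        unfolding eventually_at_filter by (intro always_eventually allI impI) (use eqD in metis)
    qed
  qed
  show ?thesis unfolding target by (intro vec_tendstoI comp)
qed

end
end

lemma max_split: "p * t / q = (1 / q) * (p * max 0 (1 * t) - p * max 0 (-1 * t))" for p t q :: real
  by (auto simp: max_def field_simps)

context lem6
begin

context
  fixes x :: "nat \<Rightarrow> real ^ 'd" and L l :: nat and R :: real
  assumes l: "l < L" and R: "\<And>r. r < L \<Longrightarrow> norm (x r) \<le> R"
begin

lemmas int_p' = int_p[where x=x and L=L and l=l and R=R, OF l R] and int_pvec' = int_pvec[where x=x and L=L and l=l and R=R, OF l R] and int_pcomp' = int_pcomp[where x=x and L=L and l=l and R=R, OF l R] and lipA' = lipA[where x=x and L=L and l=l and R=R, OF l R] and X1' = X1[where x=x and L=L and l=l and R=R, OF l R] and X2' = X2[where x=x and L=L and l=l and R=R, OF l R]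

lemma R0': "0 \<le> R" using R[OF l] norm_ge_zero order_trans by blast

lemma p01: "0 \<le> softmax_weight L x b v l" "softmax_weight L x b v l \<le> 1"
  using sw_le1[OF l] less_imp_le[OF sw_pos[OF l]] by auto

lemma int_psq: "integrable M (\<lambda>\<omega>. (softmax_weight L x q (n a \<omega>) l)^2)"
  by (rule finite_measure.integrable_const_bound[where B=1])
     (auto intro!: AE_I2 simp: finite_measure_axioms p01 power_le_one)

lemma int_psq2: "integrable M (\<lambda>\<omega>. (softmax_weight L x q (n a \<omega>) l * max 0 (s * n a \<omega> $ j))^2)"
proof (rule Bochner_Integration.integrable_bound)
  show "integrable M (\<lambda>\<omega>. s^2 * (n a \<omega> $ j)^2)" using comp_moments(1)[where k=2] by simp
  show "AE \<omega> in M. norm ((softmax_weight L x q (n a \<omega>) l * max 0 (s * n a \<omega> $ j))^2) \<le> norm (s^2 * (n a \<omega> $ j)^2)"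
  proof (intro AE_I2)
    fix \<omega>
    have "0 \<le> softmax_weight L x q (n a \<omega>) l * max 0 (s * n a \<omega> $ j)" using p01 by simp
    moreover have "softmax_weight L x q (n a \<omega>) l * max 0 (s * n a \<omega> $ j) \<le> \<bar>s * n a \<omega> $ j\<bar>"
      using p01[of q "n a \<omega>"] by (auto simp: max_def mult_left_le_one_le)
    ultimately have "(softmax_weight L x q (n a \<omega>) l * max 0 (s * n a \<omega> $ j))^2 \<le> (\<bar>s * n a \<omega> $ j\<bar>)^2"
      by (intro power_mono) auto
    then show "norm ((softmax_weight L x q (n a \<omega>) l * max 0 (s * n a \<omega> $ j))^2) \<le> norm (s^2 * (n a \<omega> $ j)^2)"
      by (simp add: power_mult_distrib)
  qed
qed measurable

lemma int_pmax: "integrable M (\<lambda>\<omega>. softmax_weight L x q (n a \<omega>) l * max 0 (s * n a \<omega> $ j))"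
  by (rule square_integrable_imp_integrable[OF _ int_psq2]) measurable

lemma AE_l: "AE \<omega> in M.
        (\<exists>A :: real \<Rightarrow> real.
           (\<forall>\<beta>. \<beta> \<noteq> 0 \<longrightarrow>
              (\<lambda>m. (1 / real m) * (\<Sum>i<m. softmax_weight L x \<beta> (n i \<omega>) l)) \<longlonglongrightarrow> A \<beta>)
           \<and> (A \<longlongrightarrow> 1 / real L) (at 0))
      \<and> (\<exists>B :: real \<Rightarrow> real ^ 'd.
           (\<forall>\<beta>. \<beta> \<noteq> 0 \<longrightarrow>
              (\<lambda>m. (1 / real m) *\<^sub>R (\<Sum>i<m. (softmax_weight L x \<beta> (n i \<omega>) l / \<beta>) *\<^sub>R n i \<omega>))
                \<longlonglongrightarrow> B \<beta>)
           \<and> (B \<longlongrightarrow> (1 / real L) *\<^sub>R ((1 - 1 / real L) *\<^sub>R x l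
                                     - (1 / real L) *\<^sub>R (\<Sum>r\<in>{..<L} - {l}. x r))) (at 0))"
proof -
  have E1: "AE \<omega> in M. \<forall>q\<in>\<rat>. (\<lambda>m. (\<Sum>i<m. softmax_weight L x q (n i \<omega>) l) / real m)
      \<longlonglongrightarrow> expectation (\<lambda>\<omega>. softmax_weight L x q (n 0 \<omega>) l)"
    unfolding AE_ball_countable[OF countable_rat]
  proof
    fix q :: real
    show "AE \<omega> in M. (\<lambda>m. (\<Sum>i<m. softmax_weight L x q (n i \<omega>) l) / real m)
      \<longlonglongrightarrow> expectation (\<lambda>\<omega>. softmax_weight L x q (n 0 \<omega>) l)"
      by (rule slln_F[where F="\<lambda>v. softmax_weight L x q v l"]) (auto simp: p01 int_psq)
  qed
  have E2: "AE \<omega> in M. \<forall>q\<in>\<rat>. \<forall>j\<in>UNIV. \<forall>s\<in>{1, -1}.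
      (\<lambda>m. (\<Sum>i<m. softmax_weight L x q (n i \<omega>) l * max 0 (s * n i \<omega> $ j)) / real m)
      \<longlonglongrightarrow> expectation (\<lambda>\<omega>. softmax_weight L x q (n 0 \<omega>) l * max 0 (s * n 0 \<omega> $ j))"
    unfolding AE_ball_countable[OF countable_rat]
  proof
    fix q :: real
    show "AE \<omega> in M. \<forall>j\<in>UNIV. \<forall>s\<in>{1, -1}.
      (\<lambda>m. (\<Sum>i<m. softmax_weight L x q (n i \<omega>) l * max 0 (s * n i \<omega> $ j)) / real m)
      \<longlonglongrightarrow> expectation (\<lambda>\<omega>. softmax_weight L x q (n 0 \<omega>) l * max 0 (s * n 0 \<omega> $ j))"
      unfolding AE_ball_countable[OF countable_finite[OF finite[of UNIV]]]
    proof
      fix j :: 'd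
      show "AE \<omega> in M. \<forall>s\<in>{1, -1}.
        (\<lambda>m. (\<Sum>i<m. softmax_weight L x q (n i \<omega>) l * max 0 (s * n i \<omega> $ j)) / real m)
        \<longlonglongrightarrow> expectation (\<lambda>\<omega>. softmax_weight L x q (n 0 \<omega>) l * max 0 (s * n 0 \<omega> $ j))"
        unfolding AE_ball_countable[OF countable_finite[OF finite.insertI[OF finite.insertI[OF finite.emptyI]]]]
      proof
        fix s :: real
        show "AE \<omega> in M. (\<lambda>m. (\<Sum>i<m. softmax_weight L x q (n i \<omega>) l * max 0 (s * n i \<omega> $ j)) / real m)
          \<longlonglongrightarrow> expectation (\<lambda>\<omega>. softmax_weight L x q (n 0 \<omega>) l * max 0 (s * n 0 \<omega> $ j))"
          by (rule slln_F[where F="\<lambda>v. softmax_weight L x q v l * max 0 (s * v $ j)"]) (auto simp: p01 int_psq2)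
      qed
    qed
  qed
  have E3: "AE \<omega> in M. \<forall>j\<in>UNIV. (\<lambda>m. (\<Sum>i<m. (n i \<omega> $ j)^2) / real m) \<longlonglongrightarrow> 1"
    unfolding AE_ball_countable[OF countable_finite[OF finite[of UNIV]]]
  proof
    fix j :: 'd
    have "AE \<omega> in M. (\<lambda>m. (\<Sum>i<m. (n i \<omega> $ j)^2) / real m) \<longlonglongrightarrow> expectation (\<lambda>\<omega>. (n 0 \<omega> $ j)^2)"
    proof (rule slln_F[where F="\<lambda>v. (v $ j)^2"])
      show "integrable M (\<lambda>\<omega>. ((n 0 \<omega> $ j)^2)^2)"
        using comp_moments(1)[where k=4 and a=0 and j=j] by (simp add: power_mult[symmetric])
    qed auto
    then show "AE \<omega> in M. (\<lambda>m. (\<Sum>i<m. (n i \<omega> $ j)^2) / real m) \<longlonglongrightarrow> 1"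
      by (simp add: comp_moments(4))
  qed
  show ?thesis
    using E1 E2 E3
  proof eventually_elim
    case (elim \<omega>)
    note e1 = elim(1) and e2 = elim(2) and e3 = elim(3)
    define hbar where "hbar m = (\<Sum>i<m. hv (n i \<omega>)) / real m" for m
    have hlim: "hbar \<longlonglongrightarrow> (\<Sum>j\<in>(UNIV::'d set). 1 + 1)"
    proof -
      have eq: "hbar m = (\<Sum>j\<in>UNIV. real m / real m + (\<Sum>i<m. (n i \<omega> $ j)^2) / real m)" for m
      proof -
        have "(\<Sum>i<m. hv (n i \<omega>)) = (\<Sum>j\<in>UNIV. \<Sum>i<m. 1 + (n i \<omega> $ j)^2)"
          unfolding hv_def by (rule sum.swap)
        also have "\<dots> = (\<Sum>j\<in>UNIV. real m + (\<Sum>i<m. (n i \<omega> $ j)^2))"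
          by (simp add: sum.distrib)
        finally show ?thesis unfolding hbar_def by (simp add: sum_divide_distrib add_divide_distrib)
      qed
      have one: "(\<lambda>m. real m / real m) \<longlonglongrightarrow> 1"
        by (rule Lim_transform_eventually[OF tendsto_const])
           (auto simp: eventually_sequentially intro!: exI[of _ 1])
      show ?thesis unfolding eq
        by (intro tendsto_sum tendsto_add one) (use e3 in auto)
    qed
    define H where "H = (\<Sum>j\<in>(UNIV::'d set). 1 + 1) + (1::real)"
    have hev: "eventually (\<lambda>m. hbar m \<le> H) sequentially"
      using order_tendstoD(2)[OF hlim, of H] unfolding H_def by (auto elim: eventually_mono)
    have Ehv0: "0 \<le> expectation (\<lambda>\<omega>. hv (n 0 \<omega>))" by (intro Bochner_Integration.integral_nonneg hv_nonneg)
    have plip: "\<bar>softmax_weight L x b v l - softmax_weight L x q v l\<bar> \<le> 2 * R * \<bar>b - q\<bar> * hv v" for b q v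
    proof -
      have "\<bar>softmax_weight L x b v l - softmax_weight L x q v l\<bar> \<le> 2 * R * norm v * \<bar>b - q\<bar>"
        by (rule sw_lip[OF l R])
      also have "\<dots> \<le> 2 * R * \<bar>b - q\<bar> * hv v"
      proof -
        have "norm v * \<bar>b - q\<bar> \<le> hv v * \<bar>b - q\<bar>" using norm_le_hv[of v] by (intro mult_right_mono) auto
        then have "(2 * R) * (norm v * \<bar>b - q\<bar>) \<le> (2 * R) * (hv v * \<bar>b - q\<bar>)" using R0' by (intro mult_left_mono) auto
        then show ?thesis by (simp add: algebra_simps)
      qed
      finally show ?thesis .
    qed
    show ?case
    proof (intro conjI)
      show "\<exists>A :: real \<Rightarrow> real.
           (\<forall>\<beta>. \<beta> \<noteq> 0 \<longrightarrow>
              (\<lambda>m. (1 / real m) * (\<Sum>i<m. softmax_weight L x \<beta> (n i \<omega>) l)) \<longlonglongrightarrow> A \<beta>)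
           \<and> (A \<longlongrightarrow> 1 / real L) (at 0)"
      proof (intro exI[of _ "\<lambda>\<beta>. expectation (\<lambda>\<omega>. softmax_weight L x \<beta> (n 0 \<omega>) l)"] conjI allI impI)
        show "((\<lambda>\<beta>. expectation (\<lambda>\<omega>. softmax_weight L x \<beta> (n 0 \<omega>) l)) \<longlongrightarrow> 1 / real L) (at 0)"
          by (rule X1')
        fix \<beta> :: real assume b: "\<beta> \<noteq> 0"
        show "(\<lambda>m. (1 / real m) * (\<Sum>i<m. softmax_weight L x \<beta> (n i \<omega>) l)) \<longlonglongrightarrow>
          expectation (\<lambda>\<omega>. softmax_weight L x \<beta> (n 0 \<omega>) l)"
        proof (rule rat_extension[where a="\<lambda>m b. (1 / real m) * (\<Sum>i<m. softmax_weight L x b (n i \<omega>) l)"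
              and \<mu>="\<lambda>b. expectation (\<lambda>\<omega>. softmax_weight L x b (n 0 \<omega>) l)" and h=hbar and H=H
              and \<delta>=1 and c="2 * R" and c'="2 * R * expectation (\<lambda>\<omega>. hv (n 0 \<omega>))", OF _ hev b])
          show "(\<lambda>m. (1 / real m) * (\<Sum>i<m. softmax_weight L x q (n i \<omega>) l)) \<longlonglongrightarrow>
             expectation (\<lambda>\<omega>. softmax_weight L x q (n 0 \<omega>) l)" if "q \<in> \<rat>" "q \<noteq> 0" for q
            using e1 that by simp
          show "\<bar>(1 / real m) * (\<Sum>i<m. softmax_weight L x \<beta> (n i \<omega>) l) -
                 (1 / real m) * (\<Sum>i<m. softmax_weight L x q (n i \<omega>) l)\<bar> \<le> 2 * R * \<bar>\<beta> - q\<bar> * hbar m" for q m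
            unfolding hbar_def using avg_lip[of "\<lambda>i. softmax_weight L x \<beta> (n i \<omega>) l" "\<lambda>i. softmax_weight L x q (n i \<omega>) l"
              "2 * R * \<bar>\<beta> - q\<bar>" "\<lambda>i. hv (n i \<omega>)" m] plip by simp
          show "\<bar>expectation (\<lambda>\<omega>. softmax_weight L x \<beta> (n 0 \<omega>) l) - expectation (\<lambda>\<omega>. softmax_weight L x q (n 0 \<omega>) l)\<bar>
             \<le> 2 * R * expectation (\<lambda>\<omega>. hv (n 0 \<omega>)) * \<bar>\<beta> - q\<bar>" for q
            using lipA'[where b=\<beta> and a=0 and q=q] by (simp add: algebra_simps)
        qed (use R0' Ehv0 in auto)
      qed
    next
      show "\<exists>B :: real \<Rightarrow> real ^ 'd.
           (\<forall>\<beta>. \<beta> \<noteq> 0 \<longrightarrow>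
              (\<lambda>m. (1 / real m) *\<^sub>R (\<Sum>i<m. (softmax_weight L x \<beta> (n i \<omega>) l / \<beta>) *\<^sub>R n i \<omega>))
                \<longlonglongrightarrow> B \<beta>)
           \<and> (B \<longlongrightarrow> (1 / real L) *\<^sub>R ((1 - 1 / real L) *\<^sub>R x l
                                     - (1 / real L) *\<^sub>R (\<Sum>r\<in>{..<L} - {l}. x r))) (at 0)"
      proof (intro exI[of _ "\<lambda>\<beta>. (1 / \<beta>) *\<^sub>R integral\<^sup>L M (\<lambda>\<omega>. softmax_weight L x \<beta> (n 0 \<omega>) l *\<^sub>R n 0 \<omega>)"] conjI allI impI)
        show "((\<lambda>\<beta>. (1 / \<beta>) *\<^sub>R integral\<^sup>L M (\<lambda>\<omega>. softmax_weight L x \<beta> (n 0 \<omega>) l *\<^sub>R n 0 \<omega>)) \<longlongrightarrow>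
          (1 / real L) *\<^sub>R ((1 - 1 / real L) *\<^sub>R x l - (1 / real L) *\<^sub>R (\<Sum>r\<in>{..<L} - {l}. x r))) (at 0)"
          by (rule X2')
        fix \<beta> :: real assume b: "\<beta> \<noteq> 0"
        show "(\<lambda>m. (1 / real m) *\<^sub>R (\<Sum>i<m. (softmax_weight L x \<beta> (n i \<omega>) l / \<beta>) *\<^sub>R n i \<omega>)) \<longlonglongrightarrow>
          (1 / \<beta>) *\<^sub>R integral\<^sup>L M (\<lambda>\<omega>. softmax_weight L x \<beta> (n 0 \<omega>) l *\<^sub>R n 0 \<omega>)"
        proof (rule vec_tendstoI)
          fix j :: 'd
          define a where "a m b = (1 / real m) * (\<Sum>i<m. softmax_weight L x b (n i \<omega>) l * n i \<omega> $ j / b)" for m b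
          define \<mu> where "\<mu> b = expectation (\<lambda>\<omega>. softmax_weight L x b (n 0 \<omega>) l * n 0 \<omega> $ j / b)" for b
          define cc where "cc = 2 * R / \<bar>\<beta>\<bar> + 2 / \<beta>^2"
          have cc0: "0 \<le> cc" unfolding cc_def using R0' by auto
          have seq_eq: "((1 / real m) *\<^sub>R (\<Sum>i<m. (softmax_weight L x \<beta> (n i \<omega>) l / \<beta>) *\<^sub>R n i \<omega>)) $ j = a m \<beta>" for m
            unfolding a_def by (simp add: sum_component)
          have lim_eq: "((1 / \<beta>) *\<^sub>R integral\<^sup>L M (\<lambda>\<omega>. softmax_weight L x \<beta> (n 0 \<omega>) l *\<^sub>R n 0 \<omega>)) $ j = \<mu> \<beta>"
            unfolding \<mu>_def using vec_integral_comp[OF int_pvec', of \<beta> 0 j] by simp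
          have "(\<lambda>m. a m \<beta>) \<longlonglongrightarrow> \<mu> \<beta>"
          proof (rule rat_extension[where h=hbar and H=H and \<delta>="\<bar>\<beta>\<bar> / 2" and c=cc
                and c'="cc * expectation (\<lambda>\<omega>. hv (n 0 \<omega>))", OF _ hev b])
            show "(\<lambda>m. a m q) \<longlonglongrightarrow> \<mu> q" if q: "q \<in> \<rat>" "q \<noteq> 0" for q
            proof -
              define Sp where "Sp s m = (\<Sum>i<m. softmax_weight L x q (n i \<omega>) l * max 0 (s * n i \<omega> $ j))" for s m
              define Ep where "Ep s = expectation (\<lambda>\<omega>. softmax_weight L x q (n 0 \<omega>) l * max 0 (s * n 0 \<omega> $ j))" for s
              have lp: "(\<lambda>m. Sp s m / real m) \<longlonglongrightarrow> Ep s" if "s \<in> {1, -1}" for s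
                using e2 q(1) that unfolding Sp_def Ep_def by blast
              have aq: "a m q = (1 / q) * (Sp 1 m / real m - Sp (-1) m / real m)" for m
              proof -
                have "(\<Sum>i<m. softmax_weight L x q (n i \<omega>) l * n i \<omega> $ j / q) = (1 / q) * (Sp 1 m - Sp (-1) m)"
                  unfolding Sp_def by (subst max_split) (simp add: sum_divide_distrib[symmetric] sum_subtractf)
                then show ?thesis unfolding a_def by (simp add: diff_divide_distrib mult.commute)
              qed
              have \<mu>q: "\<mu> q = (1 / q) * (Ep 1 - Ep (-1))"
              proof -
                have "\<mu> q = expectation (\<lambda>\<omega>. (1 / q) * (softmax_weight L x q (n 0 \<omega>) l * max 0 (1 * n 0 \<omega> $ j)
                   - softmax_weight L x q (n 0 \<omega>) l * max 0 (-1 * n 0 \<omega> $ j)))"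
                  unfolding \<mu>_def by (subst max_split) simp
                also have "\<dots> = (1 / q) * (Ep 1 - Ep (-1))"
                  unfolding Ep_def using int_pmax[of q 0 1 j] int_pmax[of q 0 "-1" j] by simp
                finally show ?thesis .
              qed
              show ?thesis unfolding aq \<mu>q by (intro tendsto_intros lp) auto
            qed
            show "\<bar>a m \<beta> - a m q\<bar> \<le> cc * \<bar>\<beta> - q\<bar> * hbar m" if "q \<in> \<rat>" "\<bar>q - \<beta>\<bar> < \<bar>\<beta>\<bar> / 2" for q m
              unfolding a_def hbar_def
              using avg_lip[of "\<lambda>i. softmax_weight L x \<beta> (n i \<omega>) l * n i \<omega> $ j / \<beta>"
                  "\<lambda>i. softmax_weight L x q (n i \<omega>) l * n i \<omega> $ j / q" "cc * \<bar>\<beta> - q\<bar>" "\<lambda>i. hv (n i \<omega>)" m]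
                sw_lipB[OF l R b that(2)] unfolding cc_def by simp
            show "\<bar>\<mu> \<beta> - \<mu> q\<bar> \<le> cc * expectation (\<lambda>\<omega>. hv (n 0 \<omega>)) * \<bar>\<beta> - q\<bar>"
              if "q \<in> \<rat>" "\<bar>q - \<beta>\<bar> < \<bar>\<beta>\<bar> / 2" for q
            proof -
              have "\<bar>\<mu> \<beta> - \<mu> q\<bar> \<le> (cc * \<bar>\<beta> - q\<bar>) * expectation (\<lambda>\<omega>. hv (n 0 \<omega>))"
                unfolding \<mu>_def
                by (rule exp_lip[OF _ _ int_hv]) (use int_pcomp' sw_lipB[OF l R b that(2)] in \<open>auto simp: cc_def\<close>)
              then show ?thesis by (simp add: mult.commute mult.left_commute)
            qed
          qed (use b cc0 Ehv0 in auto)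
          then show "(\<lambda>m. ((1 / real m) *\<^sub>R (\<Sum>i<m. (softmax_weight L x \<beta> (n i \<omega>) l / \<beta>) *\<^sub>R n i \<omega>)) $ j) \<longlonglongrightarrow>
              ((1 / \<beta>) *\<^sub>R integral\<^sup>L M (\<lambda>\<omega>. softmax_weight L x \<beta> (n 0 \<omega>) l *\<^sub>R n 0 \<omega>)) $ j"
            unfolding seq_eq lim_eq .
        qed
      qed
    qed
  qed
qed

end
end

lemma (in prob_space) AE_all_less:
  assumes "\<And>l. l < (L::nat) \<Longrightarrow> AE \<omega> in M. P l \<omega>"
  shows "AE \<omega> in M. \<forall>l<L. P l \<omega>"
proof -
  have "AE \<omega> in M. \<forall>l\<in>{..<L}. P l \<omega>"
    using assms by (subst AE_ball_countable) (auto intro: countable_finite)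
  then show ?thesis by eventually_elim auto
qed

theorem lemma6:
  fixes M :: "'w measure"
    and n :: "nat \<Rightarrow> 'w \<Rightarrow> real ^ 'd"
    and x :: "nat \<Rightarrow> real ^ 'd"
    and L :: nat
  assumes "prob_space M"
    and "L \<ge> 2"
    and "\<forall>i<L. \<forall>j<L. i \<noteq> j \<longrightarrow> x i \<noteq> x j"
    and "\<forall>i<L. \<forall>j<L. norm (x i) = norm (x j)"
    and "\<forall>i. n i \<in> borel_measurable M"
    and "prob_space.indep_vars M (\<lambda>_. borel) (\<lambda>(i, j). \<lambda>\<omega>. n i \<omega> $ j) (UNIV :: (nat \<times> 'd) set)"
    and "\<forall>i j. distributed M lborel (\<lambda>\<omega>. n i \<omega> $ j) (\<lambda>t. ennreal (std_normal_density t))"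
  shows
    "(AE \<omega> in M. \<forall>l<L.
        (\<exists>A :: real \<Rightarrow> real.
           (\<forall>\<beta>. \<beta> \<noteq> 0 \<longrightarrow>
              (\<lambda>m. (1 / real m) * (\<Sum>i<m. softmax_weight L x \<beta> (n i \<omega>) l)) \<longlonglongrightarrow> A \<beta>)
           \<and> (A \<longlongrightarrow> 1 / real L) (at 0))
      \<and> (\<exists>B :: real \<Rightarrow> real ^ 'd.
           (\<forall>\<beta>. \<beta> \<noteq> 0 \<longrightarrow>
              (\<lambda>m. (1 / real m) *\<^sub>R (\<Sum>i<m. (softmax_weight L x \<beta> (n i \<omega>) l / \<beta>) *\<^sub>R n i \<omega>))
                \<longlonglongrightarrow> B \<beta>)
           \<and> (B \<longlongrightarrow> (1 / real L) *\<^sub>R ((1 - 1 / real L) *\<^sub>R x l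
                                     - (1 / real L) *\<^sub>R (\<Sum>r\<in>{..<L} - {l}. x r))) (at 0)))
     \<and> (\<forall>i. \<forall>l<L.
          ((\<lambda>\<beta>. integral\<^sup>L M (\<lambda>\<omega>. softmax_weight L x \<beta> (n i \<omega>) l)) \<longlongrightarrow> 1 / real L) (at 0)
        \<and> ((\<lambda>\<beta>. (1 / \<beta>) *\<^sub>R integral\<^sup>L M (\<lambda>\<omega>. softmax_weight L x \<beta> (n i \<omega>) l *\<^sub>R n i \<omega>))
             \<longlongrightarrow> (1 / real L) *\<^sub>R ((1 - 1 / real L) *\<^sub>R x l
                                     - (1 / real L) *\<^sub>R (\<Sum>r\<in>{..<L} - {l}. x r))) (at 0))"
proof -
  interpret lem6 M n using assms(1,5,6,7) by (simp add: lem6_def lem6_axioms_def)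
  define R where "R = (\<Sum>r<L. norm (x r))"
  have R: "\<And>r. r < L \<Longrightarrow> norm (x r) \<le> R" unfolding R_def by (intro member_le_sum) auto
  show ?thesis
  proof (intro conjI allI impI)
    show "AE \<omega> in M. \<forall>l<L.
        (\<exists>A :: real \<Rightarrow> real.
           (\<forall>\<beta>. \<beta> \<noteq> 0 \<longrightarrow>
              (\<lambda>m. (1 / real m) * (\<Sum>i<m. softmax_weight L x \<beta> (n i \<omega>) l)) \<longlonglongrightarrow> A \<beta>)
           \<and> (A \<longlongrightarrow> 1 / real L) (at 0))
      \<and> (\<exists>B :: real \<Rightarrow> real ^ 'd.
           (\<forall>\<beta>. \<beta> \<noteq> 0 \<longrightarrow>
              (\<lambda>m. (1 / real m) *\<^sub>R (\<Sum>i<m. (softmax_weight L x \<beta> (n i \<omega>) l / \<beta>) *\<^sub>R n i \<omega>))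
                \<longlonglongrightarrow> B \<beta>)
           \<and> (B \<longlongrightarrow> (1 / real L) *\<^sub>R ((1 - 1 / real L) *\<^sub>R x l
                                     - (1 / real L) *\<^sub>R (\<Sum>r\<in>{..<L} - {l}. x r))) (at 0))"
      apply (rule AE_all_less)
      apply (rule AE_l[where x=x and L=L and R=R])
       apply assumption
      apply (rule R)
      apply assumption
      done
  next
    fix i l assume l: "l < L"
    show "((\<lambda>\<beta>. integral\<^sup>L M (\<lambda>\<omega>. softmax_weight L x \<beta> (n i \<omega>) l)) \<longlongrightarrow> 1 / real L) (at 0)"
      by (rule X1[where x=x and L=L and l=l and R=R, OF l R])
    show "((\<lambda>\<beta>. (1 / \<beta>) *\<^sub>R integral\<^sup>L M (\<lambda>\<omega>. softmax_weight L x \<beta> (n i \<omega>) l *\<^sub>R n i \<omega>))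
             \<longlongrightarrow> (1 / real L) *\<^sub>R ((1 - 1 / real L) *\<^sub>R x l
                                     - (1 / real L) *\<^sub>R (\<Sum>r\<in>{..<L} - {l}. x r))) (at 0)"
      by (rule X2[where x=x and L=L and l=l and R=R, OF l R])
  qed
qed

end
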